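(* Consider a multi-sender single-uniprior index-coding instance with binary messages, information-flow graph $\mathcal{G}$ and message graph $\mathcal{U}$, and let $\mathcal{V}_S$ be the vertex set of a message-disconnected leaf SCC of $\mathcal{G}$. Then for any index code for this instance, every message $x_j$ with $j\in\mathcal{V}_S$ is a function of the transmitted codeword alone (the concatenation of all senders' outputs); i.e., any receiver can decode all messages of $\mathcal{V}_S$, even without using its own prior message.
   Context: Multi-sender single-uniprior index coding with binary messages: there are $n$ receivers and $n$ independent messages $x_1,\dots,x_n$, each a single bit uniformly distributed on $\{0,1\}$. Receiver $i$ knows $x_i$ a priori and requests a set of messages not containing $x_i$. The information-flow graph is the directed graph $\mathcal{G}=(\mathcal{V},\mathcal{A})$, $\mathcal{V}=\{1,\dots,n\}$, with an arc $(j\to i)$ iff receiver $i$ requests $x_j$. There are $S$ senders; sender $s$ knows a subset $\mathcal{M}_s$ of the messages, and every message is known to some sender. An index code consists of, for each sender $s$, an encoding function mapping the messages in $\mathcal{M}_s$ to $\ell_s$ bits, and for each receiver $i$ a decoding function that, from all senders' outputs together with $x_i$, returns every message requested by $i$, for all message values. The message graph $\mathcal{U}$ is the undirected graph on $\mathcal{V}$ with an edge $\{i,j\}$ iff some sender knows both $x_i$ and $x_j$. A leaf SCC of $\mathcal{G}$ is a strongly connected component with at least two vertices and no arc from it to a vertex outside it. A leaf SCC with vertex set $\mathcal{V}_S$ is message-disconnected iff there are two vertices in $\mathcal{V}_S$ that are not joined by any path in $\mathcal{U}$ (paths may use any vertices of $\mathcal{U}$). *)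

theory Defs
  imports Main
begin

text \<open>Vertices (receivers/messages) are 0..n-1, senders are 0..S-1.
  R i = set of messages requested by receiver i; M s = messages known by sender s.\<close>

definition ic_instance :: "nat \<Rightarrow> nat \<Rightarrow> (nat \<Rightarrow> nat set) \<Rightarrow> (nat \<Rightarrow> nat set) \<Rightarrow> bool" where
  "ic_instance n S R M \<longleftrightarrow>
     (\<forall>i<n. R i \<subseteq> {..<n} \<and> i \<notin> R i) \<and>
     (\<forall>s<S. M s \<subseteq> {..<n}) \<and>
     (\<forall>j<n. \<exists>s<S. j \<in> M s)"

definition flow_arcs :: "nat \<Rightarrow> (nat \<Rightarrow> nat set) \<Rightarrow> (nat \<times> nat) set" where
  "flow_arcs n R = {(j, i). i < n \<and> j \<in> R i}"

definition msg_edges :: "nat \<Rightarrow> (nat \<Rightarrow> nat set) \<Rightarrow> (nat \<times> nat) set" where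
  "msg_edges S M = {(i, j). i \<noteq> j \<and> (\<exists>s<S. i \<in> M s \<and> j \<in> M s)}"

definition is_scc :: "nat \<Rightarrow> (nat \<times> nat) set \<Rightarrow> nat set \<Rightarrow> bool" where
  "is_scc n A C \<longleftrightarrow> C \<subseteq> {..<n} \<and> C \<noteq> {} \<and>
     (\<forall>u\<in>C. \<forall>v\<in>C. (u, v) \<in> A\<^sup>*) \<and>
     (\<forall>u\<in>C. \<forall>w<n. (u, w) \<in> A\<^sup>* \<and> (w, u) \<in> A\<^sup>* \<longrightarrow> w \<in> C)"

definition is_leaf_scc :: "nat \<Rightarrow> (nat \<times> nat) set \<Rightarrow> nat set \<Rightarrow> bool" where
  "is_leaf_scc n A C \<longleftrightarrow> is_scc n A C \<and> 2 \<le> card C \<and>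
     (\<forall>u\<in>C. \<forall>w. (u, w) \<in> A \<longrightarrow> w \<in> C)"

definition message_disconnected :: "nat \<Rightarrow> (nat \<Rightarrow> nat set) \<Rightarrow> nat set \<Rightarrow> bool" where
  "message_disconnected S M C \<longleftrightarrow> (\<exists>a\<in>C. \<exists>b\<in>C. (a, b) \<notin> (msg_edges S M)\<^sup>*)"

text \<open>An index code: encoders enc s mapping the message vector x to a bit string of length
  l s that depends only on the messages in M s; decoders dec i taking all senders' outputs
  and the prior x_i, returning (as a function of the message index) the requested messages.\<close>
definition is_index_code ::
  "nat \<Rightarrow> nat \<Rightarrow> (nat \<Rightarrow> nat set) \<Rightarrow> (nat \<Rightarrow> nat set) \<Rightarrow> (nat \<Rightarrow> nat)
   \<Rightarrow> (nat \<Rightarrow> (nat \<Rightarrow> bool) \<Rightarrow> bool list)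
   \<Rightarrow> (nat \<Rightarrow> (nat \<Rightarrow> bool list) \<Rightarrow> bool \<Rightarrow> nat \<Rightarrow> bool) \<Rightarrow> bool" where
  "is_index_code n S R M l enc dec \<longleftrightarrow>
     (\<forall>s<S. \<forall>x. length (enc s x) = l s) \<and>
     (\<forall>s<S. \<forall>x y. (\<forall>m\<in>M s. x m = y m) \<longrightarrow> enc s x = enc s y) \<and>
     (\<forall>x. \<forall>i<n. \<forall>j\<in>R i.
        dec i (\<lambda>s. if s < S then enc s x else []) (x i) j = x j)"

end

theory Submission
  imports Defs
begin

lemma back_prop:
  assumes code: "is_index_code n S R M l enc dec"
    and C: "(\<lambda>s. if s < S then enc s x else []) = (\<lambda>s. if s < S then enc s y else [])"
    and path: "(u, v) \<in> (flow_arcs n R)\<^sup>*"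
  shows "x v = y v \<longrightarrow> x u = y u"
  using path
proof (induction rule: rtrancl_induct)
  case base
  then show ?case by simp
next
  case (step w v)
  have dec: "\<forall>x. \<forall>i<n. \<forall>j\<in>R i.
        dec i (\<lambda>s. if s < S then enc s x else []) (x i) j = x j"
    using code unfolding is_index_code_def by blast
  from step(2) have v: "v < n" "w \<in> R v" unfolding flow_arcs_def by auto
  have dx: "dec v (\<lambda>s. if s < S then enc s x else []) (x v) w = x w"
    using dec v by blast
  have dy: "dec v (\<lambda>s. if s < S then enc s y else []) (y v) w = y w"
    using dec v by blast
  have "x v = y v \<longrightarrow> x w = y w"
  proof
    assume "x v = y v"
    then have "dec v (\<lambda>s. if s < S then enc s x else []) (x v) w
             = dec v (\<lambda>s. if s < S then enc s y else []) (y v) w"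
      using C by simp
    then show "x w = y w" using dx dy by simp
  qed
  then show ?case using step(3) by blast
qed

theorem lemma11:
  assumes "ic_instance n S R M"
    and "is_leaf_scc n (flow_arcs n R) VS"
    and "message_disconnected S M VS"
    and "is_index_code n S R M l enc dec"
  shows "\<exists>f. \<forall>x. \<forall>j\<in>VS. f (\<lambda>s. if s < S then enc s x else []) j = x j"
proof -
  define Cw where "Cw x = (\<lambda>s. if s < S then enc s x else [])" for x
  have sc: "\<forall>u\<in>VS. \<forall>v\<in>VS. (u, v) \<in> (flow_arcs n R)\<^sup>*"
    using assms(2) unfolding is_leaf_scc_def is_scc_def by blast
  have allnone: "x u = y u" if "Cw x = Cw y" "u \<in> VS" "v \<in> VS" "x v = y v" for x y u v
    using back_prop[OF assms(4), of x y u v] that sc unfolding Cw_def by blast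
  obtain a b where ab: "a \<in> VS" "b \<in> VS" "(a, b) \<notin> (msg_edges S M)\<^sup>*"
    using assms(3) unfolding message_disconnected_def by blast
  define K where "K = {m. (a, m) \<in> (msg_edges S M)\<^sup>*}"
  have aK: "a \<in> K" unfolding K_def by simp
  have bK: "b \<notin> K" using ab unfolding K_def by simp
  have Ks: "M s \<subseteq> K \<or> M s \<inter> K = {}" if "s < S" for s
  proof (cases "M s \<inter> K = {}")
    case False
    then obtain m where m: "m \<in> M s" "m \<in> K" by blast
    have "m' \<in> K" if "m' \<in> M s" for m'
    proof (cases "m' = m")
      case False
      then have "(m, m') \<in> msg_edges S M"
        unfolding msg_edges_def using m \<open>m' \<in> M s\<close> \<open>s < S\<close> by blast
      then show ?thesis using m(2) unfolding K_def
        by (simp add: rtrancl.rtrancl_into_rtrancl)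
    qed (use m in simp)
    then show ?thesis by blast
  qed simp
  have enc_dep: "\<forall>s<S. \<forall>x y. (\<forall>m\<in>M s. x m = y m) \<longrightarrow> enc s x = enc s y"
    using assms(4) unfolding is_index_code_def by blast
  have key: "\<forall>j\<in>VS. x j = y j" if eq: "Cw x = Cw y" for x y
  proof -
    define z where "z m = (if m \<in> K then x m else y m)" for m
    have "Cw z = Cw x"
    proof
      fix s show "Cw z s = Cw x s"
      proof (cases "s < S")
        case True
        show ?thesis
        proof (cases "M s \<subseteq> K")
          case True2: True
          have "\<forall>m\<in>M s. z m = x m" using True2 unfolding z_def by auto
          then have "enc s z = enc s x"
            using enc_dep \<open>s < S\<close> by blast
          then show ?thesis unfolding Cw_def by simp
        next
          case False
          then have "M s \<inter> K = {}" using Ks \<open>s < S\<close> by blast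
          then have "\<forall>m\<in>M s. z m = y m" unfolding z_def by auto
          then have "enc s z = enc s y"
            using enc_dep \<open>s < S\<close> by blast
          moreover have "enc s y = enc s x"
            using fun_cong[OF eq, of s] \<open>s < S\<close> unfolding Cw_def by simp
          ultimately show ?thesis unfolding Cw_def by simp
        qed
      qed (simp add: Cw_def)
    qed
    then have "z b = x b" using allnone[of z x b a] ab aK unfolding z_def by simp
    then have "x b = y b" using bK unfolding z_def by simp
    then show ?thesis using allnone[OF eq] ab by blast
  qed
  define f where "f c j = (SOME x. Cw x = c) j" for c j
  have "\<forall>x. \<forall>j\<in>VS. f (Cw x) j = x j"
  proof (intro allI ballI)
    fix x j assume j: "j \<in> VS"
    have "Cw (SOME x'. Cw x' = Cw x) = Cw x" by (rule someI[where x=x]) (rule refl)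
    then show "f (Cw x) j = x j" unfolding f_def using key j by blast
  qed
  then show ?thesis unfolding Cw_def by blast
qed

end
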